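(* Let $c>0$, $D>0$, $k>0$, let the angular power spectrum satisfy $\sum_{l=0}^{\infty}(2l+1)^3C_l<\infty$, and for $L\in\mathbb N$ let $u_L$ be the truncated approximation described in the context. Then there exists a constant $C_L$, depending only on $c$, $D$ and $k$, such that for all $t>0$ \[ \|u_L(\theta ,\varphi ,t+h)-u_L(\theta ,\varphi ,t)\|_{L_2(\Omega \times\mathbb S^{2})} \le C_Lh\quad\text{as } h\to 0+. \]
   Context: On the unit sphere with coordinates $(\theta,\varphi)\in[0,\pi)\times[0,2\pi)$ and measure $\sin\theta\,d\theta\,d\varphi$, $Y_{lm}(\theta,\varphi)=d_{lm}e^{im\varphi}P_l^m(\cos\theta)$, $d_{lm}=(-1)^m\big[\frac{(2l+1)(l-m)!}{4\pi(l+m)!}\big]^{1/2}$, are complex spherical harmonics; $\mathbf 0$ denotes $\theta=\varphi=0$. $T=\sum_{l,m}a_{lm}Y_{lm}$ is a real Gaussian isotropic field with $a_{lm}$ complex Gaussian, $a_{lm}=(-1)^ma_{l,-m}$, $\mathbf E a_{lm}=0$, $\mathbf Ea_{lm}\overline{a_{l'm'}}=\delta_l^{l'}\delta_m^{m'}C_l$, independent for $m\ne-m'$ ($C_l$: angular power spectrum). The truncated approximation (of the solution of $\frac1{c^2}u_{tt}+\frac1Du_t=k^2\Delta_{(\theta,\varphi)}u$, $u|_{t=0}=T$, $u_t|_{t=0}=0$) is $u_L(\theta,\varphi,t)=\exp(-\frac{c^2t}{2D})\sum_{l=0}^{L-1}\sum_{m=-l}^lY_{lm}(\theta,\varphi)\xi_{lm}(t)$,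 with $\xi_{lm}(t)=\sqrt{\frac{4\pi}{2l+1}}a_{lm}\overline{Y_{l0}(\mathbf 0)}[A_l(t)+B_l(t)]$, $A_l(t)=[\cosh(tK_l)+\frac{c^2}{2DK_l}\sinh(tK_l)]\mathbf 1_{\{l\le l^*\}}$, $B_l(t)=[\cos(tK_l')+\frac{c^2}{2DK_l'}\sin(tK_l')]\mathbf 1_{\{l>l^*\}}$, $K_l=\sqrt{\frac{c^4}{4D^2}-c^2l(l+1)k^2}$, $K_l'=\sqrt{c^2l(l+1)k^2-\frac{c^4}{4D^2}}$, $l^*=\frac{\sqrt{D^2k^2+c^2}-Dk}{2Dk}$ (with $\sinh(tK_l)/K_l:=t$ if $K_l=0$). $\|X\|_{L_2(\Omega\times\mathbb S^2)}=(\mathbf E\int_{\mathbb S^2}|X|^2\sin\theta\,d\theta\,d\varphi)^{1/2}$. *)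

theory Defs
  imports "HOL-Probability.Probability" "HOL-Computational_Algebra.Polynomial"
begin

text \<open>Associated Legendre function without Condon-Shortley phase (the phase (-1)^m is
  contained in d_lm), via the Rodrigues formula for 0 <= m <= l:
  P_l^m(x) = 1/(2^l l!) (1-x^2)^(m/2) d^(l+m)/dx^(l+m) (x^2-1)^l,
  and P_l^(-m) = (-1)^m (l-m)!/(l+m)! P_l^m.\<close>
definition assoc_legendre :: "nat \<Rightarrow> int \<Rightarrow> real \<Rightarrow> real" where
  "assoc_legendre l m x =
     (let n = nat \<bar>m\<bar>;
          Pp = 1 / (2 ^ l * fact l) * sqrt (1 - x\<^sup>2) ^ n
               * poly ((pderiv ^^ (l + n)) ([:-1, 0, 1:] ^ l)) x
      in if 0 \<le> m then Pp
         else (-1) ^ n * (fact (l - n) / fact (l + n)) * Pp)"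

definition d_coef :: "nat \<Rightarrow> int \<Rightarrow> real" where
  "d_coef l m = (-1) ^ nat \<bar>m\<bar> *
     sqrt ((2 * real l + 1) * fact (nat (int l - m)) / (4 * pi * fact (nat (int l + m))))"

definition sph_harm :: "nat \<Rightarrow> int \<Rightarrow> real \<Rightarrow> real \<Rightarrow> complex" where
  "sph_harm l m \<theta> \<phi> =
     complex_of_real (d_coef l m) * exp (\<i> * of_int m * of_real \<phi>)
       * complex_of_real (assoc_legendre l m (cos \<theta>))"

definition Kl :: "real \<Rightarrow> real \<Rightarrow> real \<Rightarrow> nat \<Rightarrow> real" where
  "Kl c D k l = sqrt (c ^ 4 / (4 * D\<^sup>2) - c\<^sup>2 * real l * (real l + 1) * k\<^sup>2)"

definition Kl' :: "real \<Rightarrow> real \<Rightarrow> real \<Rightarrow> nat \<Rightarrow> real" where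
  "Kl' c D k l = sqrt (c\<^sup>2 * real l * (real l + 1) * k\<^sup>2 - c ^ 4 / (4 * D\<^sup>2))"

definition lstar :: "real \<Rightarrow> real \<Rightarrow> real \<Rightarrow> real" where
  "lstar c D k = (sqrt (D\<^sup>2 * k\<^sup>2 + c\<^sup>2) - D * k) / (2 * D * k)"

definition sinh_div :: "real \<Rightarrow> real \<Rightarrow> real" where
  "sinh_div t K = (if K = 0 then t else sinh (t * K) / K)"

definition A_fun :: "real \<Rightarrow> real \<Rightarrow> real \<Rightarrow> nat \<Rightarrow> real \<Rightarrow> real" where
  "A_fun c D k l t =
     (if real l \<le> lstar c D k
      then cosh (t * Kl c D k l) + c\<^sup>2 / (2 * D) * sinh_div t (Kl c D k l)
      else 0)"

definition B_fun :: "real \<Rightarrow> real \<Rightarrow> real \<Rightarrow> nat \<Rightarrow> real \<Rightarrow> real" where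
  "B_fun c D k l t =
     (if real l > lstar c D k
      then cos (t * Kl' c D k l) + c\<^sup>2 / (2 * D * Kl' c D k l) * sin (t * Kl' c D k l)
      else 0)"

definition xi :: "real \<Rightarrow> real \<Rightarrow> real \<Rightarrow> (nat \<Rightarrow> int \<Rightarrow> 'a \<Rightarrow> complex)
                    \<Rightarrow> nat \<Rightarrow> int \<Rightarrow> 'a \<Rightarrow> real \<Rightarrow> complex" where
  "xi c D k a l m \<omega> t =
     complex_of_real (sqrt (4 * pi / (2 * real l + 1))) * a l m \<omega>
       * cnj (sph_harm l 0 0 0)
       * complex_of_real (A_fun c D k l t + B_fun c D k l t)"

definition uL :: "real \<Rightarrow> real \<Rightarrow> real \<Rightarrow> nat \<Rightarrow> (nat \<Rightarrow> int \<Rightarrow> 'a \<Rightarrow> complex)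
                    \<Rightarrow> 'a \<Rightarrow> real \<Rightarrow> real \<Rightarrow> real \<Rightarrow> complex" where
  "uL c D k L a \<omega> \<theta> \<phi> t =
     complex_of_real (exp (- (c\<^sup>2 * t / (2 * D))))
       * (\<Sum>l<L. \<Sum>m\<in>{- int l..int l}. sph_harm l m \<theta> \<phi> * xi c D k a l m \<omega> t)"

definition L2_sq :: "'a measure \<Rightarrow> ('a \<Rightarrow> real \<Rightarrow> real \<Rightarrow> complex) \<Rightarrow> ennreal" where
  "L2_sq M X = (\<integral>\<^sup>+ \<omega>. (\<integral>\<^sup>+ x \<in> {0..<pi} \<times> {0..<2*pi}.
       ennreal ((cmod (X \<omega> (fst x) (snd x)))\<^sup>2 * sin (fst x)) \<partial>lborel) \<partial>M)"

definition L2_norm :: "'a measure \<Rightarrow> ('a \<Rightarrow> real \<Rightarrow> real \<Rightarrow> complex) \<Rightarrow> ennreal" where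
  "L2_norm M X = (if L2_sq M X = \<infinity> then \<infinity> else ennreal (sqrt (enn2real (L2_sq M X))))"

definition gaussian_family :: "'a measure \<Rightarrow> 'i set \<Rightarrow> ('i \<Rightarrow> 'a \<Rightarrow> real) \<Rightarrow> bool" where
  "gaussian_family M I X =
     (\<forall>F c. finite F \<longrightarrow> F \<subseteq> I \<longrightarrow>
        (let Y = (\<lambda>\<omega>. \<Sum>i\<in>F. c i * X i \<omega>) in
          (\<exists>\<mu> \<sigma>. \<sigma> > 0 \<and> distributed M lborel Y (normal_density \<mu> \<sigma>))
          \<or> (Y \<in> borel_measurable M \<and> (\<exists>\<mu>. AE \<omega> in M. Y \<omega> = \<mu>))))"

definition idx_set :: "(nat \<times> int) set" where
  "idx_set = {(l, m). \<bar>m\<bar> \<le> int l}"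

definition gaussian_isotropic_coeffs ::
    "'a measure \<Rightarrow> (nat \<Rightarrow> int \<Rightarrow> 'a \<Rightarrow> complex) \<Rightarrow> (nat \<Rightarrow> real) \<Rightarrow> bool" where
  "gaussian_isotropic_coeffs M a C \<longleftrightarrow>
     prob_space M \<and>
     (\<forall>(l, m) \<in> idx_set. a l m \<in> borel_measurable M) \<and>
     gaussian_family M {(l, m, b). (l, m) \<in> idx_set}
        (\<lambda>(l, m, b) \<omega>. if b then Re (a l m \<omega>) else Im (a l m \<omega>)) \<and>
     (\<forall>(l, m) \<in> idx_set. \<forall>\<omega> \<in> space M. a l (- m) \<omega> = (-1) ^ nat \<bar>m\<bar> * cnj (a l m \<omega>)) \<and>
     (\<forall>(l, m) \<in> idx_set. integrable M (a l m) \<and> (\<integral>\<omega>. a l m \<omega> \<partial>M) = 0) \<and>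
     (\<forall>(l, m) \<in> idx_set. \<forall>(l', m') \<in> idx_set.
        integrable M (\<lambda>\<omega>. a l m \<omega> * cnj (a l' m' \<omega>)) \<and>
        (\<integral>\<omega>. a l m \<omega> * cnj (a l' m' \<omega>) \<partial>M)
          = (if l = l' \<and> m = m' then complex_of_real (C l) else 0)) \<and>
     (\<forall>(l, m) \<in> idx_set. \<forall>(l', m') \<in> idx_set.
        (l, m) \<noteq> (l', m') \<and> m \<noteq> - m' \<longrightarrow>
        prob_space.indep_var M borel (a l m) borel (a l' m'))"

end

theory Submission imports Defs begin

lemma exp_cosh_le:
  fixes a K t :: real assumes "\<bar>K\<bar> \<le> a" "t \<ge> 0"
  shows "\<bar>exp (-(a*t)) * cosh (t*K)\<bar> \<le> 1" "\<bar>exp (-(a*t)) * sinh (t*K)\<bar> \<le> 1"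
proof -
  have c: "\<bar>cosh (t*K)\<bar> \<le> exp (\<bar>t*K\<bar>)" unfolding cosh_def
    by (cases "t*K \<ge> 0") (auto simp: add_mono exp_minus_inverse intro!: order_trans[OF _ exp_ge_zero] )
  have s: "\<bar>sinh (t*K)\<bar> \<le> exp (\<bar>t*K\<bar>)" unfolding sinh_def
    by (cases "t*K \<ge> 0") (auto simp: add_mono exp_minus_inverse intro!: order_trans[OF _ exp_ge_zero] )
  have e: "exp (-(a*t)) * exp (\<bar>t*K\<bar>) \<le> 1"
  proof -
    have "\<bar>t*K\<bar> \<le> a*t" using assms using mult_left_mono[of "\<bar>K\<bar>" a t] by (simp add: abs_mult mult.commute)
    then show ?thesis by (simp add: exp_add[symmetric])
  qed
  show "\<bar>exp (-(a*t)) * cosh (t*K)\<bar> \<le> 1"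
    using e c by (simp add: abs_mult) (meson exp_gt_zero less_le_not_le mult_left_mono order.trans)
  show "\<bar>exp (-(a*t)) * sinh (t*K)\<bar> \<le> 1"
    using e s by (simp add: abs_mult) (meson exp_gt_zero less_le_not_le mult_left_mono order.trans)
qed

lemma lip_from_deriv:
  fixes f f' :: "real \<Rightarrow> real"
  assumes d: "\<And>s. (f has_real_derivative f' s) (at s)" and b: "\<And>s. s \<ge> 0 \<Longrightarrow> \<bar>f' s\<bar> \<le> M"
    and "t > 0" "h > 0"
  shows "\<bar>f (t+h) - f t\<bar> \<le> M*h"
proof -
  obtain z where z: "t<z" "z<t+h" "f (t+h) - f t = (t+h-t) * f' z"
    using MVT2[of t "t+h" f f'] assms by auto
  have "\<bar>f' z\<bar> \<le> M" using b[of z] z assms by auto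
  then show ?thesis using z assms by (simp add: abs_mult mult.commute mult_right_mono)
qed

lemma lipB:
  fixes a b K :: real assumes a: "a > 0"
  shows "\<exists>M. \<forall>t>0. \<forall>h>0. \<bar>exp (-(a*(t+h)))*(cos((t+h)*K) + b * sin((t+h)*K))
             - exp (-(a*t))*(cos(t*K) + b * sin(t*K))\<bar> \<le> M*h"
proof (intro exI allI impI)
  fix t h :: real assume th: "t > 0" "h > 0"
  let ?f = "\<lambda>s. exp (-(a* s))*(cos(s*K) + b * sin(s*K))"
  let ?f' = "\<lambda>s. -a*exp(-(a* s))*(cos(s*K)+b * sin(s*K)) + exp(-(a* s))*(-sin(s*K)*K + b * cos(s*K)*K)"
  have d: "(?f has_real_derivative ?f' s) (at s)" for s
    by (rule derivative_eq_intros refl | simp add: algebra_simps)+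
  have b: "\<bar>?f' s\<bar> \<le> a*(1+\<bar>b\<bar>) + \<bar>K\<bar> + \<bar>b\<bar>*\<bar>K\<bar>" if "s \<ge> 0" for s
  proof -
    have e: "exp(-(a* s)) \<le> 1" "exp(-(a* s)) > 0" using that a by auto
    have c1: "\<bar>cos(s*K)+b * sin(s*K)\<bar> \<le> 1+\<bar>b\<bar>"
      using abs_triangle_ineq[of "cos(s*K)" "b * sin(s*K)"] abs_cos_le_one[of "s*K"] abs_sin_le_one[of "s*K"]
        mult_left_mono[OF abs_sin_le_one[of "s * K"] abs_ge_zero[of b]] by (simp only: abs_mult mult_1_right) 
    have c2: "\<bar>-sin(s*K)*K + b * cos(s*K)*K\<bar> \<le> \<bar>K\<bar> + \<bar>b\<bar>*\<bar>K\<bar>"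
    proof -
      have "\<bar>-sin(s*K)*K + b * cos(s*K)*K\<bar> = \<bar>-sin(s*K) + b * cos(s*K)\<bar>*\<bar>K\<bar>"
        by (simp add: abs_mult[symmetric] algebra_simps)
      also have "\<bar>-sin(s*K) + b * cos(s*K)\<bar> \<le> 1+\<bar>b\<bar>"
        using abs_triangle_ineq[of "-sin(s*K)" "b * cos(s*K)"] abs_cos_le_one[of "s*K"] abs_sin_le_one[of "s*K"]
        mult_left_mono[OF abs_cos_le_one[of "s * K"] abs_ge_zero[of b]] by (simp only: abs_mult mult_1_right abs_minus_cancel)
      then have "\<bar>-sin(s*K) + b * cos(s*K)\<bar>*\<bar>K\<bar> \<le> (1+\<bar>b\<bar>)*\<bar>K\<bar>" by (rule mult_right_mono) simp
      finally show ?thesis by (simp add: algebra_simps)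
    qed
    have "\<bar>?f' s\<bar> \<le> \<bar>-a*exp(-(a* s))*(cos(s*K)+b * sin(s*K))\<bar> + \<bar>exp(-(a* s))*(-sin(s*K)*K + b * cos(s*K)*K)\<bar>"
      by (rule abs_triangle_ineq)
    also have "\<dots> = a*exp(-(a* s))*\<bar>cos(s*K)+b * sin(s*K)\<bar> + exp(-(a* s))*\<bar>-sin(s*K)*K + b * cos(s*K)*K\<bar>"
      using a by (simp add: abs_mult)
    also have "\<dots> \<le> a*1*(1+\<bar>b\<bar>) + 1*(\<bar>K\<bar> + \<bar>b\<bar>*\<bar>K\<bar>)"
      apply (intro add_mono mult_mono mult_left_mono) using e a c1 c2 by auto
    finally show ?thesis by simp
  qed
  show "\<bar>?f (t+h) - ?f t\<bar> \<le> (a*(1+\<bar>b\<bar>) + \<bar>K\<bar> + \<bar>b\<bar>*\<bar>K\<bar>)*h"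
    by (rule lip_from_deriv[OF d b th])
qed

lemma lipA:
  fixes a K :: real assumes a: "a > 0" and K: "0 \<le> K" "K \<le> a"
  shows "\<exists>M. \<forall>t>0. \<forall>h>0. \<bar>exp (-(a*(t+h)))*(cosh((t+h)*K) + a * sinh_div (t+h) K)
             - exp (-(a*t))*(cosh(t*K) + a * sinh_div t K)\<bar> \<le> M*h"
proof (cases "K = 0")
  case True
  show ?thesis
  proof (intro exI allI impI)
    fix t h :: real assume th: "t > 0" "h > 0"
    let ?f = "\<lambda>s. exp (-(a * s))*(1 + a * s)"
    let ?f' = "\<lambda>s. -a*exp(-(a * s))*(1 + a * s) + exp(-(a * s))*a"
    have d: "(?f has_real_derivative ?f' s) (at s)" for s
      by (rule derivative_eq_intros refl | simp add: algebra_simps)+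
    have b: "\<bar>?f' s\<bar> \<le> 3*a" if "s \<ge> 0" for s
    proof -
      have e: "exp(-(a * s)) \<le> 1" "exp(-(a * s)) > 0" using that a by auto
      have as: "a * s * exp(-(a * s)) \<le> 1"
      proof -
        have "a * s \<le> exp (a * s)" using exp_ge_add_one_self[of "a * s"] by linarith
        then show ?thesis by (simp add: exp_minus field_simps)
      qed
      have "\<bar>?f' s\<bar> \<le> \<bar>-a*exp(-(a * s))*(1 + a * s)\<bar> + \<bar>exp(-(a * s))*a\<bar>"
        by (rule abs_triangle_ineq)
      also have "\<dots> = a*exp(-(a * s))*(1 + a * s) + exp(-(a * s))*a"
        using a that by (simp add: abs_mult)
      also have "\<dots> = a*exp(-(a * s)) + a*(a * s * exp(-(a * s))) + exp(-(a * s))*a"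
        by (simp add: algebra_simps)
      also have "\<dots> \<le> a*1 + a*1 + 1*a"
        apply (intro add_mono mult_left_mono mult_right_mono) using e a as by auto
      finally show ?thesis by simp
    qed
    have "\<bar>?f (t+h) - ?f t\<bar> \<le> (3*a)*h"
      by (rule lip_from_deriv[OF d b th])
    then show "\<bar>exp (-(a*(t+h)))*(cosh((t+h)*K) + a * sinh_div (t+h) K)
             - exp (-(a*t))*(cosh(t*K) + a * sinh_div t K)\<bar> \<le> (3*a)*h"
      using True by (simp add: sinh_div_def)
  qed
next
  case False
  then have Kp: "K > 0" using K by auto
  show ?thesis
  proof (intro exI allI impI)
    fix t h :: real assume th: "t > 0" "h > 0"
    let ?f = "\<lambda>s. exp (-(a * s))*(cosh(s * K) + a/K * sinh(s * K))"
    let ?f' = "\<lambda>s. -a*(exp(-(a * s))*cosh(s * K)) + K*(exp(-(a * s))* sinh(s * K))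
        + a/K*(-a*(exp(-(a * s))* sinh(s * K)) + K*(exp(-(a * s))*cosh(s * K)))"
    have d: "(?f has_real_derivative ?f' s) (at s)" for s
      by (rule derivative_eq_intros refl | simp add: algebra_simps)+
    have b: "\<bar>?f' s\<bar> \<le> a + K + a/K*(a+K)" if "s \<ge> 0" for s
    proof -
      have e1: "\<bar>exp(-(a * s))*cosh(s * K)\<bar> \<le> 1" "\<bar>exp(-(a * s))* sinh(s * K)\<bar> \<le> 1"
        using exp_cosh_le[of K a s] K that by (auto simp: mult.commute)
      have i1: "\<bar>-a*(exp(-(a * s))* sinh(s * K)) + K*(exp(-(a * s))*cosh(s * K))\<bar> \<le> a + K"
      proof -
        have "\<bar>-a*(exp(-(a * s))* sinh(s * K)) + K*(exp(-(a * s))*cosh(s * K))\<bar>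
           \<le> a*\<bar>exp(-(a * s))* sinh(s * K)\<bar> + K*\<bar>exp(-(a * s))*cosh(s * K)\<bar>"
          using abs_triangle_ineq[of "-a*(exp(-(a * s))* sinh(s * K))" "K*(exp(-(a * s))*cosh(s * K))"]
            a Kp by (simp add: abs_mult)
        also have "\<dots> \<le> a*1 + K*1"
          apply (intro add_mono mult_left_mono) using e1 a Kp by auto
        finally show ?thesis by simp
      qed
      have i2: "\<bar>-a*(exp(-(a * s))*cosh(s * K)) + K*(exp(-(a * s))* sinh(s * K))\<bar> \<le> a + K"
      proof -
        have "\<bar>-a*(exp(-(a * s))*cosh(s * K)) + K*(exp(-(a * s))* sinh(s * K))\<bar>
           \<le> a*\<bar>exp(-(a * s))*cosh(s * K)\<bar> + K*\<bar>exp(-(a * s))* sinh(s * K)\<bar>"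
          using abs_triangle_ineq[of "-a*(exp(-(a * s))*cosh(s * K))" "K*(exp(-(a * s))* sinh(s * K))"]
            a Kp by (simp add: abs_mult)
        also have "\<dots> \<le> a*1 + K*1"
          apply (intro add_mono mult_left_mono) using e1 a Kp by auto
        finally show ?thesis by simp
      qed
      have "\<bar>?f' s\<bar> \<le> \<bar>-a*(exp(-(a * s))*cosh(s * K)) + K*(exp(-(a * s))* sinh(s * K))\<bar>
          + \<bar>a/K*(-a*(exp(-(a * s))* sinh(s * K)) + K*(exp(-(a * s))*cosh(s * K)))\<bar>"
        by (rule abs_triangle_ineq)
      also have "\<dots> = \<bar>-a*(exp(-(a * s))*cosh(s * K)) + K*(exp(-(a * s))* sinh(s * K))\<bar>
          + a/K*\<bar>-a*(exp(-(a * s))* sinh(s * K)) + K*(exp(-(a * s))*cosh(s * K))\<bar>"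
        using a Kp by (simp add: abs_mult)
      also have "\<dots> \<le> (a+K) + a/K*(a+K)"
        apply (intro add_mono mult_left_mono i1 i2) using a Kp by auto
      finally show ?thesis by simp
    qed
    have "\<bar>?f (t+h) - ?f t\<bar> \<le> (a + K + a/K*(a+K))*h"
      by (rule lip_from_deriv[OF d b th])
    then show "\<bar>exp (-(a*(t+h)))*(cosh((t+h)*K) + a * sinh_div (t+h) K)
             - exp (-(a*t))*(cosh(t*K) + a * sinh_div t K)\<bar> \<le> (a + K + a/K*(a+K))*h"
      using Kp by (simp add: sinh_div_def mult.commute)
  qed
qed

definition gl :: "real \<Rightarrow> real \<Rightarrow> real \<Rightarrow> nat \<Rightarrow> real \<Rightarrow> real" where
  "gl c D k l t = exp (- (c\<^sup>2 * t / (2 * D))) * (A_fun c D k l t + B_fun c D k l t)"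

lemma lstar_prop:
  fixes c D k :: real assumes "c > 0" "D > 0" "k > 0" "real l \<le> lstar c D k"
  shows "c\<^sup>2 * real l * (real l + 1) * k\<^sup>2 \<le> c ^ 4 / (4 * D\<^sup>2)"
proof -
  define s where "s = sqrt (D\<^sup>2 * k\<^sup>2 + c\<^sup>2)"
  have s2: "s\<^sup>2 = D\<^sup>2 * k\<^sup>2 + c\<^sup>2" unfolding s_def using assms by simp
  define x where "x = lstar c D k"
  have x: "x = (s - D*k) / (2*D*k)" unfolding x_def lstar_def s_def by simp
  have xx: "x * (x+1) = c\<^sup>2 / (4*D\<^sup>2*k\<^sup>2)"
  proof -
    have "x * (x+1) = (s - D*k) * (s + D*k) / (4*D\<^sup>2*k\<^sup>2)"
      unfolding x using assms by (simp add: field_simps power2_eq_square)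
    also have "\<dots> = (s\<^sup>2 - D\<^sup>2*k\<^sup>2) / (4*D\<^sup>2*k\<^sup>2)" by (simp add: algebra_simps power2_eq_square)
    finally show ?thesis using s2 by simp
  qed
  have "real l * (real l + 1) \<le> x * (x+1)"
    using assms(4) unfolding x_def[symmetric] by (intro mult_mono) auto
  then have "c\<^sup>2 * k\<^sup>2 * (real l * (real l + 1)) \<le> c\<^sup>2 * k\<^sup>2 * (c\<^sup>2 / (4*D\<^sup>2*k\<^sup>2))"
    using xx by (intro mult_left_mono) auto
  also have "\<dots> = c ^ 4 / (4 * D\<^sup>2)" using assms by (simp add: field_simps power2_eq_square power4_eq_xxxx)
  finally show ?thesis by (simp add: algebra_simps)
qed

lemma lip_l:
  fixes c D k :: real assumes "c > 0" "D > 0" "k > 0"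
  shows "\<exists>M. \<forall>t>0. \<forall>h>0. \<bar>gl c D k l (t+h) - gl c D k l t\<bar> \<le> M*h"
proof -
  define a where "a = c\<^sup>2 / (2*D)"
  have a: "a > 0" unfolding a_def using assms by simp
  have ex: "exp (- (c\<^sup>2 * t / (2 * D))) = exp (-(a*t))" for t unfolding a_def by simp
  show ?thesis
  proof (cases "real l \<le> lstar c D k")
    case True
    define K where "K = Kl c D k l"
    have "c\<^sup>2 * real l * (real l + 1) * k\<^sup>2 \<le> c ^ 4 / (4 * D\<^sup>2)" using lstar_prop assms True by blast
    then have K0: "0 \<le> K" unfolding K_def Kl_def by simp
    have "K \<le> sqrt (c ^ 4 / (4 * D\<^sup>2))" unfolding K_def Kl_def by simp
    also have "\<dots> = a" unfolding a_def using assms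
      by (simp add: real_sqrt_divide power2_eq_square power4_eq_xxxx real_sqrt_mult)
    finally have Ka: "K \<le> a" .
    have g: "gl c D k l t = exp (-(a*t))*(cosh(t*K) + a * sinh_div t K)" for t
      unfolding gl_def ex A_fun_def B_fun_def using True by (simp add: K_def a_def)
    show ?thesis using lipA[OF a K0 Ka] unfolding g by simp
  next
    case False
    define K where "K = Kl' c D k l"
    have g: "gl c D k l t = exp (-(a*t))*(cos(t*K) + (c\<^sup>2 / (2 * D * K)) * sin(t*K))" for t
      unfolding gl_def ex A_fun_def B_fun_def using False by (simp add: K_def a_def)
    show ?thesis unfolding g using lipB[OF a, where b="c\<^sup>2 / (2 * D * K)" and K=K] by blast
  qed
qed

lemma assoc_legendre_bounded: "\<exists>B. \<forall>x\<in>{-1..1}. \<bar>assoc_legendre l m x\<bar> \<le> B"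
proof -
  have "continuous_on {-1..1} (assoc_legendre l m)"
    unfolding assoc_legendre_def Let_def
    by (cases "0 \<le> m") (auto intro!: continuous_intros)
  then have "bounded (assoc_legendre l m ` {-1..1})"
    by (intro compact_imp_bounded compact_continuous_image) auto
  then show ?thesis unfolding bounded_iff by auto
qed

lemma sph_harm_bounded: "\<exists>B. \<forall>\<theta> \<phi>. cmod (sph_harm l m \<theta> \<phi>) \<le> B"
proof -
  obtain B where B: "\<forall>x\<in>{-1..1}. \<bar>assoc_legendre l m x\<bar> \<le> B" using assoc_legendre_bounded by blast
  have "cmod (sph_harm l m \<theta> \<phi>) \<le> \<bar>d_coef l m\<bar> * B" for \<theta> \<phi>
  proof -
    have e: "cmod (exp (\<i> * of_int m * of_real \<phi>)) = 1" by (simp add: norm_exp_eq_Re)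
    have "cmod (sph_harm l m \<theta> \<phi>) = \<bar>d_coef l m\<bar> * \<bar>assoc_legendre l m (cos \<theta>)\<bar>"
      unfolding sph_harm_def by (simp add: norm_mult e)
    also have "\<dots> \<le> \<bar>d_coef l m\<bar> * B" using B[rule_format, of "cos \<theta>"]
      by (intro mult_left_mono) auto
    finally show ?thesis .
  qed
  then show ?thesis by blast
qed

definition coef :: "nat \<Rightarrow> complex" where
  "coef l = complex_of_real (sqrt (4 * pi / (2 * real l + 1))) * cnj (sph_harm l 0 0 0)"

definition TT :: "nat \<Rightarrow> (nat \<times> int) set" where
  "TT L = Sigma {..<L} (\<lambda>l. {- int l..int l})"

lemma finite_TT: "finite (TT L)" unfolding TT_def by auto

lemma uL_eq:
  "uL c D k L a \<omega> \<theta> \<phi> t = (\<Sum>(l,m)\<in>TT L. sph_harm l m \<theta> \<phi> * coef l * a l m \<omega> * complex_of_real (gl c D k l t))"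
proof -
  have "uL c D k L a \<omega> \<theta> \<phi> t = (\<Sum>l<L. \<Sum>m\<in>{- int l..int l}. sph_harm l m \<theta> \<phi> * coef l * a l m \<omega> * complex_of_real (gl c D k l t))"
    unfolding uL_def sum_distrib_left
    by (intro sum.cong refl) (simp add: xi_def gl_def coef_def algebra_simps)
  also have "\<dots> = (\<Sum>(l,m)\<in>TT L. sph_harm l m \<theta> \<phi> * coef l * a l m \<omega> * complex_of_real (gl c D k l t))"
    unfolding TT_def by (subst sum.Sigma) auto
  finally show ?thesis .
qed

lemma sq_cmod_Re: "cmod z ^ 2 = Re (z * cnj z)" unfolding cmod_power2 by (simp add: power2_eq_square)

theorem corollary3:
  fixes c D k :: real and L :: nat and C :: "nat \<Rightarrow> real"
  assumes "c > 0" and "D > 0" and "k > 0"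
    and "summable (\<lambda>l. (2 * real l + 1) ^ 3 * C l)"
  shows "\<exists>CL :: real. \<forall>(M :: 'a measure) a. gaussian_isotropic_coeffs M a C \<longrightarrow>
           (\<forall>t > 0. \<forall>\<^sub>F h in at_right 0.
              L2_norm M (\<lambda>\<omega> \<theta> \<phi>. uL c D k L a \<omega> \<theta> \<phi> (t + h) - uL c D k L a \<omega> \<theta> \<phi> t)
                \<le> ennreal (CL * h))"
proof -
  have "\<forall>l. \<exists>M. \<forall>t>0. \<forall>h>0. \<bar>gl c D k l (t+h) - gl c D k l t\<bar> \<le> M*h"
    using lip_l[OF assms(1-3)] by blast
  then obtain Mf where Mf: "\<And>l t h. t > 0 \<Longrightarrow> h > 0 \<Longrightarrow> \<bar>gl c D k l (t+h) - gl c D k l t\<bar> \<le> Mf l * h"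
    by metis
  have "\<forall>l m. \<exists>B. \<forall>\<theta> \<phi>. cmod (sph_harm l m \<theta> \<phi>) \<le> B" using sph_harm_bounded by blast
  then obtain Bf where Bf: "\<And>l m \<theta> \<phi>. cmod (sph_harm l m \<theta> \<phi>) \<le> Bf l m" by metis
  define T where "T = TT L"
  have fT: "finite T" unfolding T_def by (rule finite_TT)
  define Mt where "Mt = (\<Sum>l<L. \<bar>Mf l\<bar>)"
  define W where "W = (\<Sum>(l,m)\<in>T. \<bar>Bf l m\<bar> * cmod (coef l))"
  define N where "N = real (card T)"
  define SC where "SC = (\<Sum>(l,m)\<in>T. \<bar>C l\<bar>)"
  define Q where "Q = 2*pi*pi * (W*Mt)\<^sup>2 * N * SC"
  have Mt0: "Mt \<ge> 0" unfolding Mt_def by (auto intro: sum_nonneg)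
  have W0: "W \<ge> 0" unfolding W_def by (auto intro: sum_nonneg)
  have SC0: "SC \<ge> 0" unfolding SC_def by (auto intro: sum_nonneg)
  have N0: "N \<ge> 0" unfolding N_def by simp
  have Q0: "Q \<ge> 0" unfolding Q_def using W0 Mt0 SC0 N0 by simp
  have TL: "l < L" if "(l,m) \<in> T" for l m using that unfolding T_def TT_def by auto
  have Tidx: "(l,m) \<in> idx_set" if "(l,m) \<in> T" for l m using that unfolding T_def TT_def idx_set_def by auto
  have MfMt: "\<bar>Mf l\<bar> \<le> Mt" if "l < L" for l
    unfolding Mt_def using that by (intro member_le_sum[where f="\<lambda>l. \<bar>Mf l\<bar>"]) auto
  have BW: "cmod (sph_harm l m \<theta> \<phi>) * cmod (coef l) \<le> W" if "(l,m) \<in> T" for l m \<theta> \<phi>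
  proof -
    have "cmod (sph_harm l m \<theta> \<phi>) * cmod (coef l) \<le> \<bar>Bf l m\<bar> * cmod (coef l)"
      using Bf[of l m \<theta> \<phi>] by (intro mult_right_mono) auto
    also have "\<dots> \<le> W" unfolding W_def
      using member_le_sum[where f="\<lambda>(l,m). \<bar>Bf l m\<bar> * cmod (coef l)" and i="(l,m)" and A=T] that fT
      by auto
    finally show ?thesis .
  qed
  show ?thesis
  proof (intro exI allI impI)
    fix M :: "'a measure" and a and t :: real
    assume g: "gaussian_isotropic_coeffs M a C" and t: "t > 0"
    show "\<forall>\<^sub>F h in at_right 0.
              L2_norm M (\<lambda>\<omega> \<theta> \<phi>. uL c D k L a \<omega> \<theta> \<phi> (t + h) - uL c D k L a \<omega> \<theta> \<phi> t)
                \<le> ennreal (sqrt Q * h)"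
    proof (rule eventually_mono[OF eventually_at_right_less], goal_cases)
      case (1 h)
      then have h: "h > 0" by simp
      define F where "F \<omega> = (\<Sum>(l,m)\<in>T. cmod (a l m \<omega>) ^ 2)" for \<omega>
      define P where "P = (W*Mt*h)\<^sup>2 * N"
      have P0: "P \<ge> 0" unfolding P_def using N0 by simp
      have F0: "F \<omega> \<ge> 0" for \<omega> unfolding F_def by (auto intro: sum_nonneg)
      have pw: "cmod (uL c D k L a \<omega> \<theta> \<phi> (t + h) - uL c D k L a \<omega> \<theta> \<phi> t) ^ 2 \<le> P * F \<omega>" for \<omega> \<theta> \<phi>
      proof -
        define \<Delta> where "\<Delta> l = gl c D k l (t+h) - gl c D k l t" for l
        have diff: "uL c D k L a \<omega> \<theta> \<phi> (t + h) - uL c D k L a \<omega> \<theta> \<phi> t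
           = (\<Sum>(l,m)\<in>T. sph_harm l m \<theta> \<phi> * coef l * a l m \<omega> * complex_of_real (\<Delta> l))"
          unfolding uL_eq T_def[symmetric] \<Delta>_def
          by (subst sum_subtractf[symmetric]) (auto intro!: sum.cong simp: algebra_simps)
        have each: "cmod (sph_harm l m \<theta> \<phi> * coef l * a l m \<omega> * complex_of_real (\<Delta> l))
             \<le> W*Mt*h * cmod (a l m \<omega>)" if lm: "(l,m) \<in> T" for l m
        proof -
          have d: "\<bar>\<Delta> l\<bar> \<le> Mt * h"
            using Mf[OF t h, of l] MfMt[OF TL[OF lm]] h unfolding \<Delta>_def
            by (smt (verit, best) abs_ge_self mult_right_mono)
          have "cmod (sph_harm l m \<theta> \<phi> * coef l * a l m \<omega> * complex_of_real (\<Delta> l))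
              = (cmod (sph_harm l m \<theta> \<phi>) * cmod (coef l)) * cmod (a l m \<omega>) * \<bar>\<Delta> l\<bar>"
            by (simp add: norm_mult)
          also have "\<dots> \<le> W * cmod (a l m \<omega>) * (Mt * h)"
            using BW[OF lm, of \<theta> \<phi>] d W0 by (intro mult_mono) auto
          finally show ?thesis by (simp add: algebra_simps)
        qed
        have "cmod (uL c D k L a \<omega> \<theta> \<phi> (t + h) - uL c D k L a \<omega> \<theta> \<phi> t)
            \<le> (\<Sum>(l,m)\<in>T. cmod (sph_harm l m \<theta> \<phi> * coef l * a l m \<omega> * complex_of_real (\<Delta> l)))"
          unfolding diff case_prod_beta by (rule norm_sum)
        also have "\<dots> \<le> (\<Sum>(l,m)\<in>T. W*Mt*h * cmod (a l m \<omega>))"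
          using each by (intro sum_mono) auto
        also have "\<dots> = W*Mt*h * (\<Sum>(l,m)\<in>T. cmod (a l m \<omega>))"
          by (simp add: sum_distrib_left case_prod_beta)
        finally have n: "cmod (uL c D k L a \<omega> \<theta> \<phi> (t + h) - uL c D k L a \<omega> \<theta> \<phi> t)
            \<le> W*Mt*h * (\<Sum>(l,m)\<in>T. cmod (a l m \<omega>))" .
        have "cmod (uL c D k L a \<omega> \<theta> \<phi> (t + h) - uL c D k L a \<omega> \<theta> \<phi> t) ^ 2
            \<le> (W*Mt*h * (\<Sum>(l,m)\<in>T. cmod (a l m \<omega>))) ^ 2"
          by (rule power_mono[OF n]) simp
        also have "\<dots> = (W*Mt*h)\<^sup>2 * (\<Sum>p\<in>T. cmod (a (fst p) (snd p) \<omega>))\<^sup>2"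
          by (simp add: power_mult_distrib case_prod_beta)
        also have "\<dots> \<le> (W*Mt*h)\<^sup>2 * ((\<Sum>p\<in>T. (cmod (a (fst p) (snd p) \<omega>))\<^sup>2) * card T)"
          by (intro mult_left_mono sum_squared_le_sum_of_squares) auto
        also have "\<dots> = P * F \<omega>" unfolding P_def F_def N_def by (simp add: case_prod_beta)
        finally show ?thesis .
      qed
      define S where "S = {0..<pi} \<times> {0..<2*pi}"
      have Sm: "S \<in> sets lborel"
      proof -
        have "S \<in> sets (lborel \<Otimes>\<^sub>M lborel)" unfolding S_def by (intro pair_measureI) auto
        then show ?thesis by (simp only: lborel_prod)
      qed
      have emS: "emeasure lborel S = ennreal (2*pi*pi)"
      proof -
        have "emeasure lborel S = emeasure (lborel \<Otimes>\<^sub>M lborel) S" by (simp add: lborel_prod)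
        also have "\<dots> = emeasure lborel {0..<pi} * emeasure lborel {0..<2*pi}"
          unfolding S_def by (intro lborel.emeasure_pair_measure_Times) auto
        also have "\<dots> = ennreal (2*pi*pi)" by (simp add: ennreal_mult[symmetric] mult.commute)
        finally show ?thesis .
      qed
      have prob: "prob_space M" using g unfolding gaussian_isotropic_coeffs_def by blast
      have ai: "integrable M (\<lambda>\<omega>. a l m \<omega> * cnj (a l m \<omega>)) \<and>
          (\<integral>\<omega>. a l m \<omega> * cnj (a l m \<omega>) \<partial>M) = complex_of_real (C l)" if "(l,m) \<in> T" for l m
        using g Tidx[OF that] unfolding gaussian_isotropic_coeffs_def by fastforce
      have ai2: "integrable M (\<lambda>\<omega>. cmod (a l m \<omega>) ^ 2) \<and> (\<integral>\<omega>. cmod (a l m \<omega>) ^ 2 \<partial>M) = C l"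
        if "(l,m) \<in> T" for l m
      proof -
        have I: "integrable M (\<lambda>\<omega>. a l m \<omega> * cnj (a l m \<omega>))" and
          E: "(\<integral>\<omega>. a l m \<omega> * cnj (a l m \<omega>) \<partial>M) = complex_of_real (C l)" using ai[OF that] by auto
        have "integrable M (\<lambda>\<omega>. Re (a l m \<omega> * cnj (a l m \<omega>)))" by (rule integrable_Re[OF I])
        moreover have "(\<integral>\<omega>. Re (a l m \<omega> * cnj (a l m \<omega>)) \<partial>M) = C l"
          using integral_Re[OF I] E by simp
        ultimately show ?thesis unfolding sq_cmod_Re by simp
      qed
      have Fint: "integrable M F" unfolding F_def case_prod_beta
        by (rule Bochner_Integration.integrable_sum[where f="\<lambda>p \<omega>. (cmod (a (fst p) (snd p) \<omega>))\<^sup>2"]) (metis ai2 prod.collapse)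
      have Fval: "(\<integral>\<omega>. F \<omega> \<partial>M) = (\<Sum>(l,m)\<in>T. C l)" unfolding F_def case_prod_beta
        using ai2 by (subst Bochner_Integration.integral_sum) (auto intro!: sum.cong)
      have SCb: "(\<Sum>(l,m)\<in>T. C l) \<le> SC" unfolding SC_def by (intro sum_mono) auto
      have L2: "L2_sq M (\<lambda>\<omega> \<theta> \<phi>. uL c D k L a \<omega> \<theta> \<phi> (t + h) - uL c D k L a \<omega> \<theta> \<phi> t) \<le> ennreal (Q * h\<^sup>2)"
      proof -
        have "L2_sq M (\<lambda>\<omega> \<theta> \<phi>. uL c D k L a \<omega> \<theta> \<phi> (t + h) - uL c D k L a \<omega> \<theta> \<phi> t)
           \<le> (\<integral>\<^sup>+ \<omega>. (\<integral>\<^sup>+ x. ennreal (P * F \<omega>) * indicator S x \<partial>lborel) \<partial>M)"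
          unfolding L2_sq_def S_def[symmetric]
        proof (intro nn_integral_mono mult_right_mono ennreal_leI)
          fix \<omega> x
          let ?d = "cmod (uL c D k L a \<omega> (fst x) (snd x) (t + h) - uL c D k L a \<omega> (fst x) (snd x) t)"
          have "?d\<^sup>2 * sin (fst x) \<le> ?d\<^sup>2" by (rule mult_left_le) auto
          then show "?d\<^sup>2 * sin (fst x) \<le> P * F \<omega>" using pw[of \<omega> "fst x" "snd x"] by linarith
        qed auto
        also have "\<dots> = (\<integral>\<^sup>+ \<omega>. ennreal (2*pi*pi * P * F \<omega>) \<partial>M)"
        proof (intro nn_integral_cong)
          fix \<omega>
          have "(\<integral>\<^sup>+ x. ennreal (P * F \<omega>) * indicator S x \<partial>lborel) = ennreal (P * F \<omega>) * ennreal (2*pi*pi)"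
            by (simp only: nn_integral_cmult_indicator[OF Sm] emS)
          also have "\<dots> = ennreal (P * F \<omega> * (2*pi*pi))"
            using P0 F0[of \<omega>] by (subst ennreal_mult) auto
          finally show "(\<integral>\<^sup>+ x. ennreal (P * F \<omega>) * indicator S x \<partial>lborel) = ennreal (2*pi*pi * P * F \<omega>)"
            by (simp add: ac_simps)
        qed
        also have "\<dots> = ennreal (\<integral>\<omega>. 2*pi*pi * P * F \<omega> \<partial>M)"
          using Fint P0 F0 by (intro nn_integral_eq_integral) auto
        also have "(\<integral>\<omega>. 2*pi*pi * P * F \<omega> \<partial>M) = 2*pi*pi * P * (\<Sum>(l,m)\<in>T. C l)"
          using Fval by simp
        also have "2*pi*pi * P * (\<Sum>(l,m)\<in>T. C l) \<le> 2*pi*pi * P * SC"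
          using SCb P0 by (intro mult_left_mono) auto
        also have "2*pi*pi * P * SC = Q * h\<^sup>2" unfolding P_def Q_def by (simp add: power_mult_distrib)
        finally show ?thesis by (simp add: ennreal_leI)
      qed
      have fin: "L2_sq M (\<lambda>\<omega> \<theta> \<phi>. uL c D k L a \<omega> \<theta> \<phi> (t + h) - uL c D k L a \<omega> \<theta> \<phi> t) \<noteq> \<infinity>"
        using L2 by (auto simp: top_unique)
      have "enn2real (L2_sq M (\<lambda>\<omega> \<theta> \<phi>. uL c D k L a \<omega> \<theta> \<phi> (t + h) - uL c D k L a \<omega> \<theta> \<phi> t)) \<le> Q * h\<^sup>2"
        using enn2real_mono[OF L2] Q0 by simp
      then have "sqrt (enn2real (L2_sq M (\<lambda>\<omega> \<theta> \<phi>. uL c D k L a \<omega> \<theta> \<phi> (t + h) - uL c D k L a \<omega> \<theta> \<phi> t))) \<le> sqrt (Q * h\<^sup>2)"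
        by (rule real_sqrt_le_mono)
      also have "sqrt (Q * h\<^sup>2) = sqrt Q * h" using h by (simp add: real_sqrt_mult)
      finally show ?case unfolding L2_norm_def using fin by (simp add: ennreal_leI)
    qed
  qed
qed
end
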